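(* Let $d=2$, $\varepsilon>0$, $\pi<q^{2+\varepsilon}$ and $L=q^{-1-\varepsilon/3}$. For $q$ small enough, \[ \nu\otimes\mu\left([L]^{2}\text{ is good}\right)\ge1-2q^{\varepsilon/3}. \]
   Context: Environment $\omega\in\{\text{susceptible},\text{immune}\}^{\mathbb{Z}^2}$ is drawn from $\nu$, the product measure with $\nu(\omega_x=\text{immune})=\pi$; given $\omega$, a configuration $\eta\in\{i,h\}^{\mathcal{S}}$ on the susceptible set $\mathcal{S}$ is drawn from $\mu$, the product measure with $\mu(\eta_x=i)=q$ ($i$ = infected, $h$ = healthy); $\nu\otimes\mu$ is the joint law. $[L]=\{1,\dots,L\}$ (with $L$ rounded to an integer). A square of the form $x+[L]^2$ is good if all its sites are susceptible and each of its rows and columns contains at least one infected site. *)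

theory Defs
  imports "HOL-Probability.Probability"
begin

type_synonym site = "int \<times> int"

text \<open>Environment: omega x = True means site x is immune (prob. pi_imm).
  Infection configuration: eta x = True means x is infected (prob. q).
  eta is sampled on all of Z^2 independently of omega; its restriction to the
  susceptible set has exactly the law mu given omega.\<close>

definition env_measure :: "real \<Rightarrow> (site \<Rightarrow> bool) measure" where
  "env_measure pim = PiM UNIV (\<lambda>_. measure_pmf (bernoulli_pmf pim))"

definition inf_measure :: "real \<Rightarrow> (site \<Rightarrow> bool) measure" where
  "inf_measure q = PiM UNIV (\<lambda>_. measure_pmf (bernoulli_pmf q))"

definition joint_law :: "real \<Rightarrow> real \<Rightarrow> ((site \<Rightarrow> bool) \<times> (site \<Rightarrow> bool)) measure" where
  "joint_law pim q = env_measure pim \<Otimes>\<^sub>M inf_measure q"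

definition good_square :: "nat \<Rightarrow> site \<Rightarrow> (site \<Rightarrow> bool) \<Rightarrow> (site \<Rightarrow> bool) \<Rightarrow> bool" where
  "good_square L x omega eta \<longleftrightarrow>
     (\<forall>a\<in>{1..int L}. \<forall>b\<in>{1..int L}. \<not> omega (fst x + a, snd x + b)) \<and>
     (\<forall>b\<in>{1..int L}. \<exists>a\<in>{1..int L}. eta (fst x + a, snd x + b)) \<and>
     (\<forall>a\<in>{1..int L}. \<exists>b\<in>{1..int L}. eta (fst x + a, snd x + b))"

end

theory Submission
  imports Defs "HOL-Real_Asymp.Real_Asymp"
begin

abbreviation BP :: "real \<Rightarrow> (site \<Rightarrow> bool) measure" where
  "BP p \<equiv> PiM UNIV (\<lambda>_. measure_pmf (bernoulli_pmf p))"

lemma BP_emb: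
  "{f. \<forall>j\<in>J. f j \<in> X} = prod_emb UNIV (\<lambda>_. measure_pmf (bernoulli_pmf p)) J (Pi\<^sub>E J (\<lambda>_. X))"
  by (auto simp: prod_emb_def space_PiM PiE_iff)

lemma BP_sets:
  assumes "finite J"
  shows "{f. \<forall>j\<in>J. f j \<in> X} \<in> sets (BP p)"
  unfolding BP_emb[of J X p] using assms by (intro sets_PiM_I) auto

lemma BP_measure:
  assumes "finite J"
  shows "measure (BP p) {f. \<forall>j\<in>J. f j \<in> X} = (measure (measure_pmf (bernoulli_pmf p)) X) ^ card J"
proof -
  interpret product_prob_space "\<lambda>_. measure_pmf (bernoulli_pmf p)" "UNIV :: site set"
    by unfold_locales
  show ?thesis unfolding BP_emb[of J X p]
    using assms by (subst measure_PiM_emb) auto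
qed

lemma BP_prob: "prob_space (BP p)"
  by (rule prob_space_PiM) (rule prob_space_measure_pmf)

lemma joint_fst:
  assumes "A \<in> sets (BP pim)"
  shows "measure (joint_law pim q) (A \<times> UNIV) = measure (BP pim) A"
proof -
  interpret M1: prob_space "BP pim" by (rule BP_prob)
  interpret M2: prob_space "BP q" by (rule BP_prob)
  interpret pair_prob_space "BP pim" "BP q" by unfold_locales
  have "UNIV = space (BP q)" by (simp add: space_PiM)
  then have "UNIV \<in> sets (BP q)" by (metis sets.top)
  then have "emeasure (joint_law pim q) (A \<times> UNIV) = emeasure (BP pim) A * emeasure (BP q) UNIV"
    unfolding joint_law_def env_measure_def inf_measure_def
    using assms by (intro M2.emeasure_pair_measure_Times) auto
  also have "emeasure (BP q) UNIV = 1" using M2.emeasure_space_1 \<open>UNIV = space (BP q)\<close> by simp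
  finally show ?thesis
    by (simp add: measure_def)
qed

lemma joint_snd:
  assumes "B \<in> sets (BP q)"
  shows "measure (joint_law pim q) (UNIV \<times> B) = measure (BP q) B"
proof -
  interpret M1: prob_space "BP pim" by (rule BP_prob)
  interpret M2: prob_space "BP q" by (rule BP_prob)
  interpret pair_prob_space "BP pim" "BP q" by unfold_locales
  have "UNIV = space (BP pim)" by (simp add: space_PiM)
  then have "UNIV \<in> sets (BP pim)" by (metis sets.top)
  then have "emeasure (joint_law pim q) (UNIV \<times> B) = emeasure (BP pim) UNIV * emeasure (BP q) B"
    unfolding joint_law_def env_measure_def inf_measure_def
    using assms by (intro M2.emeasure_pair_measure_Times) auto
  also have "emeasure (BP pim) UNIV = 1" using M1.emeasure_space_1 \<open>UNIV = space (BP pim)\<close> by simp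
  finally show ?thesis
    by (simp add: measure_def)
qed


lemma joint_sets:
  "A \<in> sets (BP pim) \<Longrightarrow> B \<in> sets (BP q) \<Longrightarrow> A \<times> B \<in> sets (joint_law pim q)"
  unfolding joint_law_def env_measure_def inf_measure_def by (rule pair_measureI)

lemma joint_space: "space (joint_law pim q) = UNIV"
  unfolding joint_law_def env_measure_def inf_measure_def
  by (simp add: space_pair_measure space_PiM)

lemma joint_prob: "prob_space (joint_law pim q)"
proof -
  interpret M1: prob_space "BP pim" by (rule BP_prob)
  interpret M2: prob_space "BP q" by (rule BP_prob)
  interpret pair_prob_space "BP pim" "BP q" by unfold_locales
  show ?thesis unfolding joint_law_def env_measure_def inf_measure_def
    by (rule prob_space_axioms)
qed

lemma asym:
  fixes e :: real assumes "e > 0"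
  shows "eventually (\<lambda>q. (q powr (-1-e/3)+1/2)^2 * q powr (2+e) + 2*(q powr (-1-e/3)+1/2) * exp(-q*(q powr (-1-e/3)-1/2)) \<le> 2 * q powr (e/3)) (at_right 0)"
  using assms by real_asymp

lemma main_bound:
  fixes L :: nat and q pim :: real
  assumes q: "0 < q" "q < 1" and pim: "0 \<le> pim" "pim \<le> 1"
  shows "measure (joint_law pim q) {(omega, eta). good_square L (0, 0) omega eta}
     \<ge> 1 - (real L * real L * pim + 2 * real L * (1 - q) ^ L)"
proof -
  define S where "S = {1..int L}"
  have finS: "finite S" and cardS: "card S = L" unfolding S_def by auto
  define A0 :: "(site \<Rightarrow> bool) set" where "A0 = {f. \<forall>j\<in>S\<times>S. f j \<in> {False}}"
  define R :: "int \<Rightarrow> (site \<Rightarrow> bool) set" where "R b = {f. \<forall>j\<in>(\<lambda>a. (a,b)) ` S. f j \<in> {False}}" for b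
  define C :: "int \<Rightarrow> (site \<Rightarrow> bool) set" where "C a = {f. \<forall>j\<in>Pair a ` S. f j \<in> {False}}" for a
  define B1 where "B1 = (UNIV - A0) \<times> (UNIV :: (site \<Rightarrow> bool) set)"
  define B2 where "B2 = (\<Union>b\<in>S. (UNIV :: (site \<Rightarrow> bool) set) \<times> R b)"
  define B3 where "B3 = (\<Union>a\<in>S. (UNIV :: (site \<Rightarrow> bool) set) \<times> C a)"
  interpret J: prob_space "joint_law pim q" by (rule joint_prob)
  have A0s: "A0 \<in> sets (BP pim)" unfolding A0_def using finS by (intro BP_sets) auto
  have Rs: "R b \<in> sets (BP q)" for b unfolding R_def using finS by (intro BP_sets) auto
  have Cs: "C a \<in> sets (BP q)" for a unfolding C_def using finS by (intro BP_sets) auto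
  have UNIVs: "UNIV \<in> sets (BP p)" for p
  proof -
    have "UNIV = space (BP p)" by (simp add: space_PiM)
    then show ?thesis by (metis sets.top)
  qed
  have B1s: "B1 \<in> sets (joint_law pim q)" unfolding B1_def
    using A0s UNIVs by (intro joint_sets) auto
  have B2s: "B2 \<in> sets (joint_law pim q)" unfolding B2_def
    using finS Rs UNIVs by (intro sets.finite_UN joint_sets) auto
  have B3s: "B3 \<in> sets (joint_law pim q)" unfolding B3_def
    using finS Cs UNIVs by (intro sets.finite_UN joint_sets) auto
  have G: "{(omega, eta). good_square L (0, 0) omega eta} = space (joint_law pim q) - (B1 \<union> B2 \<union> B3)"
  proof -
    have r: "R b = {f. \<forall>a\<in>S. \<not> f (a,b)}" "C b = {f. \<forall>a\<in>S. \<not> f (b,a)}" for b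
      unfolding R_def C_def by auto
    have a: "A0 = {f. \<forall>a\<in>S. \<forall>b\<in>S. \<not> f (a,b)}"
      unfolding A0_def by auto
    show ?thesis
      unfolding joint_space B1_def B2_def B3_def a r good_square_def S_def[symmetric]
      by (simp add: set_eq_iff)
  qed
  have m1: "measure (joint_law pim q) B1 \<le> real L * real L * pim"
  proof -
    have "measure (joint_law pim q) B1 = measure (BP pim) (UNIV - A0)"
      unfolding B1_def using A0s UNIVs by (intro joint_fst) auto
    also have "\<dots> = 1 - measure (BP pim) A0"
    proof -
      interpret P: prob_space "BP pim" by (rule BP_prob)
      show ?thesis using P.prob_compl[OF A0s] by (simp add: space_PiM)
    qed
    also have "measure (BP pim) A0 = (1 - pim) ^ (L * L)"
      unfolding A0_def using finS pim by (subst BP_measure) (auto simp: measure_pmf_single cardS card_cartesian_product)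
    also have "1 - (1 - pim) ^ (L * L) \<le> real L * real L * pim"
      using Bernoulli_inequality[of "- pim" "L * L"] pim by simp
    finally show ?thesis .
  qed
  have card_img: "card ((\<lambda>a. (a,b)) ` S) = L" "card (Pair a ` S) = L" for a b
    using cardS by (auto simp: card_image inj_on_def)
  have mR: "measure (BP q) (R b) = (1-q)^L" "measure (BP q) (C b) = (1-q)^L" for b
    unfolding R_def C_def using finS q
    by (subst BP_measure; auto simp: measure_pmf_single card_img)+
  have m2: "measure (joint_law pim q) B2 \<le> real L * (1 - q) ^ L"
  proof -
    have "measure (joint_law pim q) B2 \<le> (\<Sum>b\<in>S. measure (joint_law pim q) (UNIV \<times> R b))"
      unfolding B2_def using finS Rs UNIVs by (intro measure_UNION_le joint_sets) auto
    also have "\<dots> = (\<Sum>b\<in>S. (1 - q) ^ L)"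
      using Rs q finS mR by (intro sum.cong refl) (simp add: joint_snd)
    finally show ?thesis using cardS by simp
  qed
  have m3: "measure (joint_law pim q) B3 \<le> real L * (1 - q) ^ L"
  proof -
    have "measure (joint_law pim q) B3 \<le> (\<Sum>a\<in>S. measure (joint_law pim q) (UNIV \<times> C a))"
      unfolding B3_def using finS Cs UNIVs by (intro measure_UNION_le joint_sets) auto
    also have "\<dots> = (\<Sum>a\<in>S. (1 - q) ^ L)"
      using Cs q finS mR by (intro sum.cong refl) (simp add: joint_snd)
    finally show ?thesis using cardS by simp
  qed
  have "measure (joint_law pim q) (B1 \<union> B2 \<union> B3) \<le> measure (joint_law pim q) (B1 \<union> B2) + measure (joint_law pim q) B3"
    using B1s B2s B3s by (intro measure_Un_le) auto
  also have "measure (joint_law pim q) (B1 \<union> B2) \<le> measure (joint_law pim q) B1 + measure (joint_law pim q) B2"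
    using B1s B2s by (intro measure_Un_le) auto
  finally have "measure (joint_law pim q) (B1 \<union> B2 \<union> B3) \<le> real L * real L * pim + 2 * real L * (1 - q) ^ L"
    using m1 m2 m3 by linarith
  moreover have "measure (joint_law pim q) {(omega, eta). good_square L (0, 0) omega eta} = 1 - measure (joint_law pim q) (B1 \<union> B2 \<union> B3)"
    unfolding G using B1s B2s B3s by (intro J.prob_compl) auto
  ultimately show ?thesis by linarith
qed


theorem claim1:
  fixes \<epsilon> :: real
  assumes "\<epsilon> > 0"
  shows "\<exists>q0 > 0. \<forall>q pim :: real. 0 < q \<and> q < q0 \<and> 0 \<le> pim \<and> pim < q powr (2 + \<epsilon>) \<longrightarrow>
           (let L = nat (round (q powr (-1 - \<epsilon> / 3))) in
              measure (joint_law pim q) {(omega, eta). good_square L (0, 0) omega eta}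
                \<ge> 1 - 2 * q powr (\<epsilon> / 3))"
proof -
  obtain b where b: "b > 0" and H: "\<And>y. 0 < y \<Longrightarrow> y < b \<Longrightarrow>
     (y powr (-1-\<epsilon>/3)+1/2)^2 * y powr (2+\<epsilon>) + 2*(y powr (-1-\<epsilon>/3)+1/2) * exp(-y*(y powr (-1-\<epsilon>/3)-1/2)) \<le> 2 * y powr (\<epsilon>/3)"
    using asym[OF assms] unfolding eventually_at_right_field by auto
  show ?thesis
  proof (intro exI[of _ "min b (1/2)"] conjI allI impI)
    show "min b (1/2) > (0::real)" using b by simp
    fix q pim :: real
    assume A: "0 < q \<and> q < min b (1/2) \<and> 0 \<le> pim \<and> pim < q powr (2 + \<epsilon>)"
    then have q: "0 < q" "q < b" "q < 1/2" and pim0: "0 \<le> pim" and pimq: "pim < q powr (2 + \<epsilon>)" by auto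
    define x where "x = q powr (-1 - \<epsilon> / 3)"
    define L where "L = nat (round x)"
    have x0: "x > 0" unfolding x_def using q by simp
    have "of_int (round x) > x - 1/2" by (rule of_int_round_gt)
    then have "round x \<ge> 0" using x0 by linarith
    then have RL: "real L = of_int (round x)" unfolding L_def by simp
    have Lx1: "real L \<le> x + 1/2" using RL of_int_round_le[of x] by simp
    have Lx2: "real L \<ge> x - 1/2" using RL of_int_round_ge[of x] by simp
    have "q powr (2 + \<epsilon>) \<le> 1" using q assms by (intro powr_le1) auto
    then have pim1: "pim \<le> 1" using pimq by simp
    have mb: "measure (joint_law pim q) {(omega, eta). good_square L (0, 0) omega eta}
       \<ge> 1 - (real L * real L * pim + 2 * real L * (1 - q) ^ L)"
      using q pim0 pim1 by (intro main_bound) auto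
    have t1: "real L * real L * pim \<le> (x+1/2)^2 * q powr (2+\<epsilon>)"
    proof -
      have "real L * real L \<le> (x+1/2)^2" using Lx1 by (simp add: power2_eq_square mult_mono)
      then show ?thesis using pimq pim0 by (intro mult_mono) auto
    qed
    have "(1 - q) ^ L \<le> exp (-q) ^ L"
      using q by (intro power_mono) (auto simp: exp_ge_add_one_self[of "-q", simplified])
    also have "\<dots> = exp (real L * (-q))" by (rule exp_of_nat_mult[symmetric])
    also have "\<dots> \<le> exp (-q * (x - 1/2))" using Lx2 q by (simp add: mult_left_mono)
    finally have e: "(1 - q) ^ L \<le> exp (-q * (x - 1/2))" .
    have t2: "2 * real L * (1 - q) ^ L \<le> 2 * (x+1/2) * exp (-q * (x - 1/2))"
      using e Lx1 q by (intro mult_mono) auto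
    have "(x+1/2)^2 * q powr (2+\<epsilon>) + 2 * (x+1/2) * exp (-q * (x - 1/2)) \<le> 2 * q powr (\<epsilon>/3)"
      unfolding x_def using H q by auto
    then show "let L = nat (round (q powr (-1 - \<epsilon> / 3))) in
              measure (joint_law pim q) {(omega, eta). good_square L (0, 0) omega eta}
                \<ge> 1 - 2 * q powr (\<epsilon> / 3)"
      using mb t1 t2 unfolding Let_def L_def[symmetric] x_def[symmetric] by linarith
  qed
qed

end
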